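(* Let $\mathbf{H}_1,\mathbf{H}_2$ be complex Hilbert spaces with $\mathbf{H}_1$ separable, $H=\mathbf{H}_1\otimes\mathbf{H}_2$, $\mathcal{A}:H\to H$ bounded linear and $\varphi\in H$. Let $y_1,\dots,y_n\in\mathbf{H}_2$ with $\langle y_i,y_j\rangle_2=\delta_{ij}$, and let $k_1,\dots,k_n\in\mathbf{H}_2$ be linearly independent with $\langle k_i,y_j\rangle_2=\delta_{ij}$. Let $\eta_1,\dots,\eta_n\in\mathbf{H}_2$ with $\|\eta_i\|=1$ and $\langle\eta_i,y_j\rangle_2=0$ for all $i,j$, let $\varepsilon\in\mathbb{R}$, and set $k'_i=k_i+\varepsilon\eta_i$. Assume $$\|\mathcal{A}\mathcal{P}_k\|+\|\varepsilon\,\mathcal{A}\tilde{\mathcal{P}}_\eta\|<1\qquad\text{and}\qquad\tilde{\mathcal{P}}_k\sum_{i=0}^{\infty}(\mathcal{A}\mathcal{P}_k)^i\varphi=0.$$ Then $\sum_{i=0}^\infty(\mathcal{A}\mathcal{P}_{k'})^i\varphi$ converges and $\tilde{\mathcal{P}}_{k'}\sum_{i=0}^{\infty}(\mathcal{A}\mathcal{P}_{k'})^i\varphi=0$.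
   Context: $H=\mathbf{H}_1\otimes\mathbf{H}_2$ is the Hilbert tensor product with inner product $\langle\cdot,\cdot\rangle$; $\langle\cdot,\cdot\rangle_1,\langle\cdot,\cdot\rangle_2$ are the inner products of $\mathbf{H}_1,\mathbf{H}_2$ (linear in the first argument). The partial inner product $\langle\cdot,\cdot\rangle_{2'}:H\times\mathbf{H}_2\to\mathbf{H}_1$ is determined by $\langle\langle x,y\rangle_{2'},z\rangle_1=\langle x,z\otimes y\rangle$ for all $x\in H$, $y\in\mathbf{H}_2$, $z\in\mathbf{H}_1$. For $u_1,\dots,u_n\in\mathbf{H}_2$: $\mathcal{P}_u x=x-\sum_{i=1}^n\langle x,y_i\rangle_{2'}\otimes u_i$ and $\tilde{\mathcal{P}}_u x=\sum_{i=1}^n\langle x,y_i\rangle_{2'}\otimes u_i$. $\|\cdot\|$ is the operator norm. *)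

theory Defs
  imports "HOL-Analysis.Analysis"
begin

class complex_vector = real_vector +
  fixes scaleC :: "complex \<Rightarrow> 'a \<Rightarrow> 'a" (infixr "*\<^sub>C" 75)
  assumes scaleC_add_right: "a *\<^sub>C (x + y) = a *\<^sub>C x + a *\<^sub>C y"
    and scaleC_add_left: "(a + b) *\<^sub>C x = a *\<^sub>C x + b *\<^sub>C x"
    and scaleC_scaleC: "a *\<^sub>C (b *\<^sub>C x) = (a * b) *\<^sub>C x"
    and scaleC_one: "1 *\<^sub>C x = x"
    and scaleR_scaleC: "r *\<^sub>R x = complex_of_real r *\<^sub>C x"

text \<open>Inner product linear in the first argument, conjugate-linear in the second.\<close>
class complex_inner = complex_vector + real_normed_vector +
  fixes cinner :: "'a \<Rightarrow> 'a \<Rightarrow> complex"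
  assumes cinner_add_left: "cinner (x + y) z = cinner x z + cinner y z"
    and cinner_scaleC_left: "cinner (a *\<^sub>C x) y = a * cinner x y"
    and cinner_commute: "cinner x y = cnj (cinner y x)"
    and cinner_self_nonneg: "0 \<le> Re (cinner x x)"
    and cinner_self_eq_zero: "cinner x x = 0 \<longleftrightarrow> x = 0"
    and norm_eq_sqrt_cinner: "norm x = sqrt (Re (cinner x x))"

class complex_hilbert = complex_inner + complete_space

definition separable_space :: "'a::topological_space itself \<Rightarrow> bool" where
  "separable_space _ \<longleftrightarrow> (\<exists>D::'a set. countable D \<and> closure D = UNIV)"

definition cspan :: "'a::complex_vector set \<Rightarrow> 'a set" where
  "cspan S = {x. \<exists>F c. finite F \<and> F \<subseteq> S \<and> x = (\<Sum>v\<in>F. c v *\<^sub>C v)}"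

definition clinear :: "('a::complex_vector \<Rightarrow> 'b::complex_vector) \<Rightarrow> bool" where
  "clinear f \<longleftrightarrow> (\<forall>x y. f (x + y) = f x + f y) \<and> (\<forall>c x. f (c *\<^sub>C x) = c *\<^sub>C f x)"

definition cbounded_linear :: "('a::complex_inner \<Rightarrow> 'b::complex_inner) \<Rightarrow> bool" where
  "cbounded_linear f \<longleftrightarrow> clinear f \<and> (\<exists>K. \<forall>x. norm (f x) \<le> norm x * K)"

text \<open>t realises the Hilbert tensor product H = H1 \<otimes> H2: it is bilinear,
  satisfies the inner product identity on simple tensors, and the span of the simple
  tensors is dense. This characterises H1 \<otimes> H2 up to unitary isomorphism.\<close>
definition hilbert_tensor :: "('h1::complex_hilbert \<Rightarrow> 'h2::complex_hilbert \<Rightarrow> 'h::complex_hilbert) \<Rightarrow> bool" where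
  "hilbert_tensor t \<longleftrightarrow>
     (\<forall>a a' b. t (a + a') b = t a b + t a' b) \<and>
     (\<forall>a b b'. t a (b + b') = t a b + t a b') \<and>
     (\<forall>c a b. t (c *\<^sub>C a) b = c *\<^sub>C t a b) \<and>
     (\<forall>c a b. t a (c *\<^sub>C b) = c *\<^sub>C t a b) \<and>
     (\<forall>a b a' b'. cinner (t a b) (t a' b') = cinner a a' * cinner b b') \<and>
     closure (cspan (range (case_prod t))) = UNIV"

text \<open>Partial inner product: the element w of H1 with cinner w z = cinner x (z \<otimes> y) for all z.\<close>
definition pinner :: "('h1::complex_hilbert \<Rightarrow> 'h2::complex_hilbert \<Rightarrow> 'h::complex_hilbert) \<Rightarrow> 'h \<Rightarrow> 'h2 \<Rightarrow> 'h1" where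
  "pinner t x y = (THE w. \<forall>z. cinner w z = cinner x (t z y))"

definition Ptilde :: "('h1::complex_hilbert \<Rightarrow> 'h2::complex_hilbert \<Rightarrow> 'h::complex_hilbert) \<Rightarrow> nat \<Rightarrow> (nat \<Rightarrow> 'h2) \<Rightarrow> (nat \<Rightarrow> 'h2) \<Rightarrow> 'h \<Rightarrow> 'h" where
  "Ptilde t n y u x = (\<Sum>i<n. t (pinner t x (y i)) (u i))"

definition Pproj :: "('h1::complex_hilbert \<Rightarrow> 'h2::complex_hilbert \<Rightarrow> 'h::complex_hilbert) \<Rightarrow> nat \<Rightarrow> (nat \<Rightarrow> 'h2) \<Rightarrow> (nat \<Rightarrow> 'h2) \<Rightarrow> 'h \<Rightarrow> 'h" where
  "Pproj t n y u x = x - Ptilde t n y u x"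

end

theory Submission imports Defs begin
instance complex_hilbert \<subseteq> banach ..

lemma cinner_zero_left[simp]: "cinner 0 (y::'a::complex_inner) = 0"
  using cinner_add_left[of "0::'a" 0 y] by simp
lemma cinner_zero_right[simp]: "cinner (y::'a::complex_inner) 0 = 0"
  using cinner_commute[of y 0] by simp
lemma cinner_add_right: "cinner (x::'a::complex_inner) (y + z) = cinner x y + cinner x z"
  using cinner_commute[of x "y+z"] cinner_commute[of y x] cinner_commute[of z x] by (simp add: cinner_add_left)
lemma cinner_minus_left: "cinner (- x::'a::complex_inner) y = - cinner x y"
  using cinner_add_left[of x "-x" y] by (simp add: eq_neg_iff_add_eq_0 add.commute)
lemma cinner_diff_left: "cinner (x - x'::'a::complex_inner) y = cinner x y - cinner x' y"
  using cinner_add_left[of x "-x'" y] by (simp add: cinner_minus_left)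
lemma cinner_scaleC_right: "cinner (x::'a::complex_inner) (a *\<^sub>C y) = cnj a * cinner x y"
  using cinner_commute[of x "a *\<^sub>C y"] cinner_commute[of y x] by (simp add: cinner_scaleC_left)
lemma cinner_scaleR_left: "cinner (r *\<^sub>R x::'a::complex_inner) y = of_real r * cinner x y"
  by (simp add: scaleR_scaleC cinner_scaleC_left)
lemma cinner_sum_left: "cinner (\<Sum>i\<in>F. f i::'a::complex_inner) y = (\<Sum>i\<in>F. cinner (f i) y)"
  by (induction F rule: infinite_finite_induct) (auto simp: cinner_add_left)
lemma cinner_self_real: "cinner (x::'a::complex_inner) x = of_real ((norm x)^2)"
proof -
  have "Im (cinner x x) = 0" using arg_cong[OF cinner_commute[of x x], of Im] by simp
  moreover have "Re (cinner x x) = (norm x)^2" by (simp add: norm_eq_sqrt_cinner cinner_self_nonneg)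
  ultimately show ?thesis by (simp add: complex_eq_iff)
qed
lemma Re_cinner_sym: "Re (cinner (y::'a::complex_inner) x) = Re (cinner x y)"
  using arg_cong[OF cinner_commute[of y x], of Re] by simp
lemma Re_cinner_self: "Re (cinner (x::'a::complex_inner) x) = (norm x)^2"
  by (simp only: cinner_self_real Re_complex_of_real)
lemma norm_add_sq: "(norm (x + y::'a::complex_inner))^2 = (norm x)^2 + 2 * Re (cinner x y) + (norm y)^2"
proof -
  have e: "cinner (x+y) (x+y) = cinner x x + cinner x y + cinner y x + cinner y y"
    by (simp add: cinner_add_left cinner_add_right)
  have "(norm (x+y))^2 = Re (cinner (x+y) (x+y))" by (simp only: Re_cinner_self)
  also have "\<dots> = Re (cinner x x) + Re (cinner x y) + Re (cinner y x) + Re (cinner y y)"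
    by (simp only: e plus_complex.sel)
  also have "\<dots> = (norm x)^2 + 2 * Re (cinner x y) + (norm y)^2"
    by (simp only: Re_cinner_self Re_cinner_sym[of y x] mult_2 add.assoc)
  finally show ?thesis .
qed
lemma Re_cinner_le: "Re (cinner (x::'a::complex_inner) y) \<le> norm x * norm y"
proof -
  have "(norm (x + y))^2 \<le> (norm x + norm y)^2"
    by (simp add: norm_triangle_ineq power_mono)
  thus ?thesis by (simp add: norm_add_sq power2_sum)
qed
lemma norm_scaleC: "norm (a *\<^sub>C (x::'a::complex_inner)) = cmod a * norm x"
proof -
  have "cinner (a *\<^sub>C x) (a *\<^sub>C x) = (a * cnj a) * cinner x x"
    by (simp add: cinner_scaleC_left cinner_scaleC_right)
  also have "\<dots> = of_real ((cmod a * norm x)^2)"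
    by (simp add: cinner_self_real complex_norm_square[symmetric] power_mult_distrib)
  finally have "(norm (a *\<^sub>C x))^2 = (cmod a * norm x)^2"
    by (metis Re_cinner_self Re_complex_of_real)
  thus ?thesis by (rule power2_eq_imp_eq) auto
qed
lemma cauchy_schwarz: "cmod (cinner (x::'a::complex_inner) y) \<le> norm x * norm y"
proof (cases "cinner x y = 0")
  case False
  define a where "a = cnj (cinner x y) / cmod (cinner x y)"
  have ca: "cmod a = 1" using False by (simp add: a_def norm_divide)
  have "cinner (a *\<^sub>C x) y = of_real (cmod (cinner x y))"
    using False by (simp add: a_def cinner_scaleC_left field_simps complex_norm_square[symmetric] power2_eq_square)
  hence "cmod (cinner x y) = Re (cinner (a *\<^sub>C x) y)" by simp
  also have "\<dots> \<le> norm (a *\<^sub>C x) * norm y" by (rule Re_cinner_le)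
  finally show ?thesis by (simp add: norm_scaleC ca)
qed simp

lemma ht_add_left: "hilbert_tensor t \<Longrightarrow> t (a + a') b = t a b + t a' b"
  unfolding hilbert_tensor_def by blast
lemma ht_add_right: "hilbert_tensor t \<Longrightarrow> t a (b + b') = t a b + t a b'"
  unfolding hilbert_tensor_def by blast
lemma ht_scaleC_left: "hilbert_tensor t \<Longrightarrow> t (c *\<^sub>C a) b = c *\<^sub>C t a b"
  unfolding hilbert_tensor_def by blast
lemma ht_scaleC_right: "hilbert_tensor t \<Longrightarrow> t a (c *\<^sub>C b) = c *\<^sub>C t a b"
  unfolding hilbert_tensor_def by blast
lemma ht_inner: "hilbert_tensor t \<Longrightarrow> cinner (t a b) (t a' b') = cinner a a' * cinner b b'"
  unfolding hilbert_tensor_def by blast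
lemma ht_dense: "hilbert_tensor t \<Longrightarrow> closure (cspan (range (case_prod t))) = UNIV"
  unfolding hilbert_tensor_def by blast
lemma ht_scaleR_left: "hilbert_tensor t \<Longrightarrow> t (r *\<^sub>R a) b = r *\<^sub>R t a b"
  by (simp add: scaleR_scaleC ht_scaleC_left)
lemma ht_scaleR_right: "hilbert_tensor t \<Longrightarrow> t a (r *\<^sub>R b) = r *\<^sub>R t a b"
  by (simp add: scaleR_scaleC ht_scaleC_right)
lemma ht_zero_left: "hilbert_tensor t \<Longrightarrow> t 0 b = 0"
  using ht_add_left[of t 0 0 b] by simp
lemma ht_norm: "hilbert_tensor t \<Longrightarrow> norm (t a b) = norm a * norm b"
proof -
  assume h: "hilbert_tensor t"
  have "(norm (t a b))^2 = Re (cinner (t a b) (t a b))" by (simp only: Re_cinner_self)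
  also have "\<dots> = Re (cinner a a * cinner b b)" by (simp only: ht_inner[OF h])
  also have "\<dots> = (norm a * norm b)^2"
    by (simp only: cinner_self_real) (simp add: power_mult_distrib)
  finally show ?thesis by (rule power2_eq_imp_eq) auto
qed

lemma bl_t_left: "hilbert_tensor t \<Longrightarrow> bounded_linear (\<lambda>a. t a b)"
  by (rule bounded_linear_intro[where K="norm b"]) (auto simp: ht_add_left ht_scaleR_left ht_norm)

lemma rep_norm:
  assumes h: "hilbert_tensor t" and w: "\<forall>z. cinner w z = cinner x (t z y)"
  shows "norm w \<le> norm x * norm y"
proof (cases "norm w = 0")
  case False
  hence pos: "norm w > 0" by simp
  have "(norm w)^2 = Re (cinner w w)" by (simp only: Re_cinner_self)
  also have "\<dots> = Re (cinner x (t w y))" using w by simp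
  also have "\<dots> \<le> cmod (cinner x (t w y))" by (rule complex_Re_le_cmod)
  also have "\<dots> \<le> norm x * norm (t w y)" by (rule cauchy_schwarz)
  also have "\<dots> = (norm x * norm y) * norm w" by (simp add: ht_norm[OF h])
  finally have "norm w * norm w \<le> (norm x * norm y) * norm w" by (simp add: power2_eq_square)
  thus ?thesis using pos by simp
qed simp

lemma rep_unique:
  assumes "\<forall>z. cinner w z = cinner x (t z y)" "\<forall>z. cinner w' z = cinner x (t z y)"
  shows "w = w'"
proof -
  have "cinner (w - w') (w - w') = 0" using assms by (simp add: cinner_diff_left)
  thus ?thesis by (simp add: cinner_self_eq_zero)
qed

lemma cinner_tendsto_left:
  assumes "f \<longlonglongrightarrow> L"
  shows "(\<lambda>n. cinner (f n) (z::'a::complex_inner)) \<longlonglongrightarrow> cinner L z"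
proof -
  have 1: "(\<lambda>n. f n - L) \<longlonglongrightarrow> 0" using assms by (rule LIM_zero)
  have 2: "norm (cinner (f n) z - cinner L z) \<le> norm (f n - L) * norm z" for n
    using cauchy_schwarz[of "f n - L" z] by (simp only: cinner_diff_left)
  have "(\<lambda>n. cinner (f n) z - cinner L z) \<longlonglongrightarrow> 0"
    by (rule tendsto_0_le[OF 1, where K="norm z"]) (rule always_eventually, rule allI, rule 2)
  thus ?thesis by (rule LIM_zero_cancel)
qed

lemma rep_closed:
  assumes h: "hilbert_tensor (t::'h1::complex_hilbert \<Rightarrow> 'h2::complex_hilbert \<Rightarrow> 'h::complex_hilbert)"
  shows "closed {x. \<exists>w. \<forall>z. cinner w z = cinner x (t z y)}"
  unfolding closed_sequential_limits
proof (intro allI impI, elim conjE)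
  fix x :: "nat \<Rightarrow> 'h" and l
  assume xs: "\<forall>n. x n \<in> {x. \<exists>w. \<forall>z. cinner w z = cinner x (t z y)}" and lim: "x \<longlonglongrightarrow> l"
  from xs have "\<forall>n. \<exists>w. \<forall>z. cinner w z = cinner (x n) (t z y)" by simp
  hence "\<exists>w. \<forall>n. \<forall>z. cinner (w n) z = cinner (x n) (t z y)" by (rule choice)
  then obtain w where w: "\<And>n. \<forall>z. cinner (w n) z = cinner (x n) (t z y)" by blast
  have dn: "norm (w m - w n) \<le> norm (x m - x n) * norm y" for m n
    using w[of m] w[of n] by (intro rep_norm[OF h]) (simp add: cinner_diff_left)
  have "Cauchy x" using lim by (rule LIMSEQ_imp_Cauchy)
  have "Cauchy w"
  proof (rule CauchyI)
    fix e :: real assume e: "0 < e"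
    have np: "0 < norm y + 1" using norm_ge_zero[of y] by linarith
    have "0 < e / (norm y + 1)" using e np by simp
    from CauchyD[OF \<open>Cauchy x\<close> this] obtain M where M: "\<forall>m\<ge>M. \<forall>n\<ge>M. norm (x m - x n) < e / (norm y + 1)" by blast
    show "\<exists>M. \<forall>m\<ge>M. \<forall>n\<ge>M. norm (w m - w n) < e"
    proof (intro exI allI impI)
      fix m n assume "M \<le> m" "M \<le> n"
      hence a: "norm (x m - x n) < e / (norm y + 1)" using M by blast
      have "norm (w m - w n) \<le> norm (x m - x n) * (norm y + 1)"
        using dn[of m n] mult_left_mono[of "norm y" "norm y + 1" "norm (x m - x n)"] by simp
      also have "\<dots> < e / (norm y + 1) * (norm y + 1)"
        using a np by (intro mult_strict_right_mono) auto
      also have "\<dots> = e" using np by simp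
      finally show "norm (w m - w n) < e" .
    qed
  qed
  then obtain W where W: "w \<longlonglongrightarrow> W" using Cauchy_convergent convergent_def by blast
  have "cinner W z = cinner l (t z y)" for z
  proof -
    have "(\<lambda>n. cinner (w n) z) \<longlonglongrightarrow> cinner W z" by (rule cinner_tendsto_left[OF W])
    moreover have "(\<lambda>n. cinner (x n) (t z y)) \<longlonglongrightarrow> cinner l (t z y)" by (rule cinner_tendsto_left[OF lim])
    moreover have "(\<lambda>n. cinner (w n) z) = (\<lambda>n. cinner (x n) (t z y))" using w by simp
    ultimately have "(\<lambda>n. cinner (w n) z) \<longlonglongrightarrow> cinner l (t z y)" by simp
    thus ?thesis using \<open>(\<lambda>n. cinner (w n) z) \<longlonglongrightarrow> cinner W z\<close> LIMSEQ_unique by blast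
  qed
  thus "l \<in> {x. \<exists>w. \<forall>z. cinner w z = cinner x (t z y)}" by blast
qed

lemma rep_span:
  assumes h: "hilbert_tensor t"
  shows "cspan (range (case_prod t)) \<subseteq> {x. \<exists>w. \<forall>z. cinner w z = cinner x (t z y)}"
proof
  fix x assume "x \<in> cspan (range (case_prod t))"
  then obtain F c where F: "finite F" "F \<subseteq> range (case_prod t)" and x: "x = (\<Sum>v\<in>F. c v *\<^sub>C v)"
    unfolding cspan_def by blast
  have "\<exists>w. \<forall>z. cinner w z = cinner (\<Sum>v\<in>F. c v *\<^sub>C v) (t z y)"
    using F
  proof (induction F rule: finite_induct)
    case empty
    show ?case by (rule exI[of _ 0]) simp
  next
    case (insert v F)
    then obtain w where w: "\<forall>z. cinner w z = cinner (\<Sum>v\<in>F. c v *\<^sub>C v) (t z y)" by auto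
    from insert obtain a b where v: "v = t a b" by auto
    have "\<forall>z. cinner ((c v * cinner b y) *\<^sub>C a + w) z = cinner (\<Sum>v\<in>insert v F. c v *\<^sub>C v) (t z y)"
      using insert w by (simp add: cinner_add_left cinner_scaleC_left v ht_inner[OF h] mult.assoc)
    thus ?case by blast
  qed
  thus "x \<in> {x. \<exists>w. \<forall>z. cinner w z = cinner x (t z y)}" using x by simp
qed

lemma rep_exists:
  assumes h: "hilbert_tensor (t::'h1::complex_hilbert \<Rightarrow> 'h2::complex_hilbert \<Rightarrow> 'h::complex_hilbert)"
  shows "\<exists>w. \<forall>z. cinner w z = cinner x (t z y)"
proof -
  have "closure (cspan (range (case_prod t))) \<subseteq> {x. \<exists>w. \<forall>z. cinner w z = cinner x (t z y)}"
    by (rule closure_minimal[OF rep_span[OF h] rep_closed[OF h]])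
  moreover have "x \<in> closure (cspan (range (case_prod t)))" by (simp add: ht_dense[OF h])
  ultimately have "x \<in> {x. \<exists>w. \<forall>z. cinner w z = cinner x (t z y)}" by (rule subsetD)
  thus ?thesis by (rule CollectD)
qed

lemma pinner_eq:
  assumes h: "hilbert_tensor (t::'h1::complex_hilbert \<Rightarrow> 'h2::complex_hilbert \<Rightarrow> 'h::complex_hilbert)"
  shows "\<forall>z. cinner (pinner t x y) z = cinner x (t z y)"
proof -
  obtain w where w: "\<forall>z. cinner w z = cinner x (t z y)" using rep_exists[OF h] by blast
  have "\<exists>!w. \<forall>z. cinner w z = cinner x (t z y)"
    by (rule ex1I[of _ w], rule w, erule rep_unique[where x=x and t=t and y=y, OF _ w])
  thus ?thesis unfolding pinner_def by (rule theI')
qed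

lemma pinner_unique:
  assumes h: "hilbert_tensor (t::'h1::complex_hilbert \<Rightarrow> 'h2::complex_hilbert \<Rightarrow> 'h::complex_hilbert)"
    and "\<forall>z. cinner w z = cinner x (t z y)"
  shows "pinner t x y = w"
  using rep_unique[where x=x and t=t and y=y, OF pinner_eq[OF h] assms(2)] .

lemma bl_pinner:
  assumes h: "hilbert_tensor (t::'h1::complex_hilbert \<Rightarrow> 'h2::complex_hilbert \<Rightarrow> 'h::complex_hilbert)"
  shows "bounded_linear (\<lambda>x. pinner t x y)"
proof (rule bounded_linear_intro[where K="norm y"])
  fix x x'
  show "pinner t (x + x') y = pinner t x y + pinner t x' y"
    using pinner_eq[OF h, of x y] pinner_eq[OF h, of x' y]
    by (intro pinner_unique[OF h]) (simp add: cinner_add_left)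
next
  fix r x
  show "pinner t (r *\<^sub>R x) y = r *\<^sub>R pinner t x y"
    using pinner_eq[OF h, of x y]
    by (intro pinner_unique[OF h]) (simp add: cinner_scaleR_left)
next
  fix x
  show "norm (pinner t x y) \<le> norm x * norm y"
    by (rule rep_norm[OF h pinner_eq[OF h]])
qed

lemma bl_Ptilde:
  assumes h: "hilbert_tensor (t::'h1::complex_hilbert \<Rightarrow> 'h2::complex_hilbert \<Rightarrow> 'h::complex_hilbert)"
  shows "bounded_linear (\<lambda>x. Ptilde t n y u x)"
  unfolding Ptilde_def
  by (rule bounded_linear_sum, rule bounded_linear_compose[OF bl_t_left[OF h] bl_pinner[OF h]])

lemma bl_cbl: "cbounded_linear A \<Longrightarrow> bounded_linear A"
proof -
  assume a: "cbounded_linear A"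
  then obtain K where K: "\<forall>x. norm (A x) \<le> norm x * K" unfolding cbounded_linear_def by blast
  from a have l: "clinear A" unfolding cbounded_linear_def by blast
  show ?thesis
  proof (rule bounded_linear_intro[where K=K])
    fix x y show "A (x + y) = A x + A y" using l unfolding clinear_def by blast
  next
    fix r x show "A (r *\<^sub>R x) = r *\<^sub>R A x" using l unfolding clinear_def by (simp add: scaleR_scaleC)
  next
    fix x show "norm (A x) \<le> norm x * K" using K by blast
  qed
qed


lemma neumann:
  fixes f :: "'a::banach \<Rightarrow> 'a"
  assumes bl: "bounded_linear f" and b: "\<And>x. norm (f x) \<le> q * norm x" and q0: "0 \<le> q" and q1: "q < 1"
  shows "summable (\<lambda>i. (f ^^ i) \<phi>)"
    and "(\<Sum>i. (f ^^ i) \<phi>) = \<phi> + f (\<Sum>i. (f ^^ i) \<phi>)"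
    and "\<And>S. S = \<phi> + f S \<Longrightarrow> S = (\<Sum>i. (f ^^ i) \<phi>)"
proof -
  have nb: "norm ((f ^^ i) \<phi>) \<le> q^i * norm \<phi>" for i
  proof (induction i)
    case 0 show ?case by simp
  next
    case (Suc i)
    have "norm ((f ^^ Suc i) \<phi>) = norm (f ((f ^^ i) \<phi>))" by simp
    also have "\<dots> \<le> q * norm ((f ^^ i) \<phi>)" by (rule b)
    also have "\<dots> \<le> q * (q^i * norm \<phi>)" by (rule mult_left_mono[OF Suc q0])
    finally show ?case by (simp add: mult.assoc)
  qed
  have sg: "summable (\<lambda>i. q^i * norm \<phi>)"
    by (rule summable_mult2, rule summable_geometric) (use q0 q1 in simp)
  show su: "summable (\<lambda>i. (f ^^ i) \<phi>)"
    by (rule summable_comparison_test[OF _ sg]) (use nb in blast)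
  define S where "S = (\<Sum>i. (f ^^ i) \<phi>)"
  have "f S = (\<Sum>i. f ((f ^^ i) \<phi>))" unfolding S_def by (rule bounded_linear.suminf[OF bl su])
  also have "\<dots> = (\<Sum>i. (f ^^ Suc i) \<phi>)" by simp
  also have "\<dots> = S - (f ^^ 0) \<phi>" unfolding S_def by (rule suminf_split_head[OF su])
  finally have fS: "f S = S - \<phi>" by simp
  thus "(\<Sum>i. (f ^^ i) \<phi>) = \<phi> + f (\<Sum>i. (f ^^ i) \<phi>)" unfolding S_def by simp
  fix S' assume S': "S' = \<phi> + f S'"
  have "f (S' - S) = f S' - f S" by (rule linear_diff[OF bounded_linear.linear[OF bl]])
  also have "f S' = S' - \<phi>" using S' by (metis add_diff_cancel_left')
  hence "f S' - f S = S' - S" using fS by simp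
  finally have fd: "f (S' - S) = S' - S" .
  have "norm (S' - S) \<le> q * norm (S' - S)" using b[of "S' - S"] fd by simp
  hence "norm (S' - S) = 0" using q1 norm_ge_zero[of "S' - S"]
    by (metis mult_le_cancel_right1 not_le order.strict_trans1 order_antisym_conv)
  thus "S' = (\<Sum>i. (f ^^ i) \<phi>)" unfolding S_def by simp
qed

lemma pinner_vanish:
  assumes h: "hilbert_tensor (t::'h1::complex_hilbert \<Rightarrow> 'h2::complex_hilbert \<Rightarrow> 'h::complex_hilbert)"
    and k_y: "\<forall>i<n. \<forall>j<n. cinner (k i) (y j) = (if i = j then 1 else 0)"
    and P: "Ptilde t n y k S = 0" and j: "j < n"
  shows "pinner t S (y j) = 0"
proof -
  define w where "w i = pinner t S (y i)" for i
  have "cinner (w j) z = 0" for z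
  proof -
    have "0 = cinner (Ptilde t n y k S) (t z (y j))" using P by simp
    also have "\<dots> = (\<Sum>i<n. cinner (w i) z * cinner (k i) (y j))"
      unfolding Ptilde_def w_def by (simp add: cinner_sum_left ht_inner[OF h])
    also have "\<dots> = (\<Sum>i<n. if i = j then cinner (w i) z else 0)"
      using k_y j by (intro sum.cong) auto
    also have "\<dots> = cinner (w j) z" using j by simp
    finally show ?thesis by simp
  qed
  hence "cinner (w j) (w j) = 0" by blast
  thus ?thesis by (simp add: cinner_self_eq_zero w_def)
qed

theorem theorem3:
  fixes t :: "'h1::complex_hilbert \<Rightarrow> 'h2::complex_hilbert \<Rightarrow> 'h::complex_hilbert"
    and A :: "'h \<Rightarrow> 'h" and \<phi> :: 'h and n :: nat
    and y k \<eta> :: "nat \<Rightarrow> 'h2" and \<epsilon> :: real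
  assumes sep: "separable_space TYPE('h1)"
    and tens: "hilbert_tensor t"
    and A: "cbounded_linear A"
    and y_on: "\<forall>i<n. \<forall>j<n. cinner (y i) (y j) = (if i = j then 1 else 0)"
    and k_indep: "\<forall>c. (\<Sum>i<n. c i *\<^sub>C k i) = 0 \<longrightarrow> (\<forall>i<n. c i = 0)"
    and k_y: "\<forall>i<n. \<forall>j<n. cinner (k i) (y j) = (if i = j then 1 else 0)"
    and eta_norm: "\<forall>i<n. norm (\<eta> i) = 1"
    and eta_y: "\<forall>i<n. \<forall>j<n. cinner (\<eta> i) (y j) = 0"
    and small: "onorm (\<lambda>x. A (Pproj t n y k x))
                + onorm (\<lambda>x. \<epsilon> *\<^sub>R A (Ptilde t n y \<eta> x)) < 1"
    and fix0: "Ptilde t n y k (\<Sum>i. ((\<lambda>x. A (Pproj t n y k x)) ^^ i) \<phi>) = 0"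
  shows "summable (\<lambda>i. ((\<lambda>x. A (Pproj t n y (\<lambda>j. k j + \<epsilon> *\<^sub>R \<eta> j) x)) ^^ i) \<phi>)
    \<and> Ptilde t n y (\<lambda>j. k j + \<epsilon> *\<^sub>R \<eta> j)
        (\<Sum>i. ((\<lambda>x. A (Pproj t n y (\<lambda>j. k j + \<epsilon> *\<^sub>R \<eta> j) x)) ^^ i) \<phi>) = 0"
proof -
  define k' where "k' = (\<lambda>j. k j + \<epsilon> *\<^sub>R \<eta> j)"
  define Q where "Q = (\<lambda>x. A (Pproj t n y k x))"
  define E where "E = (\<lambda>x. \<epsilon> *\<^sub>R A (Ptilde t n y \<eta> x))"
  define Q' where "Q' = (\<lambda>x. A (Pproj t n y k' x))"
  have blA: "bounded_linear A" by (rule bl_cbl[OF A])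
  have blP: "bounded_linear (\<lambda>x. Pproj t n y u x)" for u
    unfolding Pproj_def by (rule bounded_linear_sub[OF bounded_linear_ident bl_Ptilde[OF tens]])
  have blQ: "bounded_linear Q" unfolding Q_def by (rule bounded_linear_compose[OF blA blP])
  have blE: "bounded_linear E" unfolding E_def
    by (rule bounded_linear_compose[OF bounded_linear_scaleR_right],
        rule bounded_linear_compose[OF blA bl_Ptilde[OF tens]])
  have Pt: "Ptilde t n y k' x = Ptilde t n y k x + \<epsilon> *\<^sub>R Ptilde t n y \<eta> x" for x
    unfolding Ptilde_def k'_def
    by (simp add: ht_add_right[OF tens] ht_scaleR_right[OF tens] sum.distrib scaleR_sum_right)
  have Q'eq: "Q' x = Q x - E x" for x
  proof -
    have "Pproj t n y k' x = Pproj t n y k x - \<epsilon> *\<^sub>R Ptilde t n y \<eta> x"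
      unfolding Pproj_def Pt by (simp add: algebra_simps)
    thus ?thesis unfolding Q'_def Q_def E_def
      by (simp add: linear_diff[OF bounded_linear.linear[OF blA]] linear_scale[OF bounded_linear.linear[OF blA]])
  qed
  define q where "q = onorm Q + onorm E"
  have oE: "0 \<le> onorm E" by (rule onorm_pos_le[OF blE])
  have oQ: "0 \<le> onorm Q" by (rule onorm_pos_le[OF blQ])
  have q1: "q < 1" using small unfolding q_def Q_def E_def .
  have q0: "0 \<le> q" unfolding q_def using oE oQ by simp
  have bQ: "norm (Q x) \<le> q * norm x" for x
  proof -
    have "norm (Q x) \<le> onorm Q * norm x" by (rule onorm[OF blQ])
    also have "\<dots> \<le> q * norm x" unfolding q_def using oE by (intro mult_right_mono) auto
    finally show ?thesis .
  qed
  have bQ': "norm (Q' x) \<le> q * norm x" for x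
  proof -
    have "norm (Q' x) \<le> norm (Q x) + norm (E x)" unfolding Q'eq by (rule norm_triangle_ineq4)
    also have "\<dots> \<le> onorm Q * norm x + onorm E * norm x"
      by (rule add_mono[OF onorm[OF blQ] onorm[OF blE]])
    also have "\<dots> = q * norm x" unfolding q_def by (simp add: algebra_simps)
    finally show ?thesis .
  qed
  have blQ': "bounded_linear Q'" unfolding Q'_def by (rule bounded_linear_compose[OF blA blP])
  define S where "S = (\<Sum>i. (Q ^^ i) \<phi>)"
  have SQ: "S = \<phi> + Q S" unfolding S_def by (rule neumann(2)[OF blQ bQ q0 q1])
  have PkS: "Ptilde t n y k S = 0" using fix0 unfolding S_def Q_def .
  have pv: "\<forall>j<n. pinner t S (y j) = 0"
    using pinner_vanish[OF tens k_y PkS] by blast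
  have PeS: "Ptilde t n y \<eta> S = 0"
    unfolding Ptilde_def using pv by (simp add: ht_zero_left[OF tens])
  have Pk'S: "Ptilde t n y k' S = 0" using Pt[of S] PkS PeS by simp
  have "Q' S = Q S" unfolding Q'_def Q_def Pproj_def using Pk'S PkS by simp
  hence SQ': "S = \<phi> + Q' S" using SQ by simp
  have sum': "summable (\<lambda>i. (Q' ^^ i) \<phi>)" by (rule neumann(1)[OF blQ' bQ' q0 q1])
  have "S = (\<Sum>i. (Q' ^^ i) \<phi>)" by (rule neumann(3)[OF blQ' bQ' q0 q1 SQ'])
  hence "Ptilde t n y k' (\<Sum>i. (Q' ^^ i) \<phi>) = 0" using Pk'S by simp
  thus ?thesis using sum' unfolding Q'_def k'_def by simp
qed

end
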